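(* Let $A$ be a Banach algebra and suppose there exists $a_0\in Z(A)$ with $a_0\neq 0$ and $\|a_0\|\le 1$. Then for every integer $n\geq 3$, $Mul_{n}(A)$ is a Banach algebra with the product $S\bullet_{a_0}T(a)=S(a_0^{n-2}T(a))$ ($a\in A$) and the operator norm; in particular $S\bullet_{a_0}T\in Mul_n(A)$ for all $S,T\in Mul_n(A)$, and $\bullet_{a_0}$ is associative.
   Context: $Z(A)$ is the center of $A$. $Mul_n(A)=Mul_n(A,A)$ is the set of bounded linear maps $T:A\to A$ with $T(a_1\cdots a_n)=a_1T(a_2\cdots a_n)=T(a_1\cdots a_{n-1})a_n$ for all $a_1,\dots,a_n\in A$ ($n$-multipliers on $A$), regarded as a subspace of $B(A)$, the bounded operators on $A$ with the operator norm. *)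

theory Defs
  imports "HOL-Analysis.Analysis"
begin

fun mprod :: "'a::times list \<Rightarrow> 'a" where
  "mprod [] = undefined"
| "mprod [x] = x"
| "mprod (x # y # xs) = x * mprod (y # xs)"

text \<open>Positive powers without a unit: npow a k = a^(k+1).\<close>
fun npow :: "'a::times \<Rightarrow> nat \<Rightarrow> 'a" where
  "npow a 0 = a"
| "npow a (Suc k) = a * npow a k"

definition center :: "'a::times set" where
  "center = {z. \<forall>b. z * b = b * z}"

definition Mul :: "nat \<Rightarrow> ('a::real_normed_algebra \<Rightarrow>\<^sub>L 'a) set" where
  "Mul n = {T. \<forall>xs. length xs = n \<longrightarrow>
      blinfun_apply T (mprod xs) = hd xs * blinfun_apply T (mprod (tl xs)) \<and>
      blinfun_apply T (mprod xs) = blinfun_apply T (mprod (butlast xs)) * last xs}"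

text \<open>The product (S \<bullet>_a0 T)(a) = S(a0^(n-2) T(a)).\<close>
definition mulprod :: "'a::real_normed_algebra \<Rightarrow> nat \<Rightarrow> ('a \<Rightarrow>\<^sub>L 'a) \<Rightarrow> ('a \<Rightarrow>\<^sub>L 'a) \<Rightarrow> ('a \<Rightarrow>\<^sub>L 'a)" where
  "mulprod a0 n S T = S o\<^sub>L (blinfun_mult_right (npow a0 (n - 3)) o\<^sub>L T)"

definition banach_algebra_on :: "'b::real_normed_vector set \<Rightarrow> ('b \<Rightarrow> 'b \<Rightarrow> 'b) \<Rightarrow> bool" where
  "banach_algebra_on M p \<longleftrightarrow>
     subspace M \<and> complete M \<and>
     (\<forall>S\<in>M. \<forall>T\<in>M. p S T \<in> M) \<and>
     (\<forall>R\<in>M. \<forall>S\<in>M. \<forall>T\<in>M. p (p R S) T = p R (p S T)) \<and>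
     (\<forall>R\<in>M. \<forall>S\<in>M. \<forall>T\<in>M. p (R + S) T = p R T + p S T \<and> p R (S + T) = p R S + p R T) \<and>
     (\<forall>c::real. \<forall>S\<in>M. \<forall>T\<in>M. p (c *\<^sub>R S) T = c *\<^sub>R p S T \<and> p S (c *\<^sub>R T) = c *\<^sub>R p S T) \<and>
     (\<forall>S\<in>M. \<forall>T\<in>M. norm (p S T) \<le> norm S * norm T)"

end

theory Submission
  imports Defs
begin

lemma mprod_Cons: "ys \<noteq> [] \<Longrightarrow> mprod (x # ys) = x * mprod ys"
  by (cases ys) auto

lemma mprod_append: "xs \<noteq> [] \<Longrightarrow> ys \<noteq> [] \<Longrightarrow>
   mprod (xs @ ys) = (mprod xs :: 'a::semigroup_mult) * mprod ys"
proof (induction xs)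
  case Nil then show ?case by simp
next
  case (Cons x xs)
  show ?case
  proof (cases "xs = []")
    case True then show ?thesis using Cons by (simp add: mprod_Cons)
  next
    case False then show ?thesis using Cons by (simp add: mprod_Cons mult.assoc)
  qed
qed

lemma npow_mprod: "npow a k = mprod (replicate (Suc k) a)"
  by (induction k) (auto simp: mprod_Cons)

lemma npow_center: "a \<in> center \<Longrightarrow> npow (a::'a::semigroup_mult) k \<in> center"
proof (induction k)
  case 0 then show ?case by simp
next
  case (Suc k)
  have h1: "\<And>b. a * b = b * a" and h2: "\<And>b. npow a k * b = b * npow a k"
    using Suc unfolding center_def by blast+
  show ?case unfolding center_def
  proof (intro CollectI allI)
    fix b
    have "npow a (Suc k) * b = a * (npow a k * b)" by (simp add: mult.assoc)
    also have "\<dots> = a * (b * npow a k)" by (simp only: h2)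
    also have "\<dots> = (a * b) * npow a k" by (simp add: mult.assoc)
    also have "\<dots> = (b * a) * npow a k" by (simp only: h1)
    also have "\<dots> = b * npow a (Suc k)" by (simp add: mult.assoc)
    finally show "npow a (Suc k) * b = b * npow a (Suc k)" .
  qed
qed

lemma npow_norm: "norm (a::'a::real_normed_algebra) \<le> 1 \<Longrightarrow> norm (npow a k) \<le> 1"
proof (induction k)
  case 0 then show ?case by simp
next
  case (Suc k)
  have "norm (npow a (Suc k)) \<le> norm a * norm (npow a k)"
    by (simp add: norm_mult_ineq)
  also have "\<dots> \<le> 1" using Suc by (simp add: mult_le_one)
  finally show ?case .
qed

lemma Mul_closed_under:
  fixes a0 :: "'a::real_normed_algebra"
  assumes c: "a0 \<in> center" and n: "n \<ge> 3" and S: "S \<in> Mul n" and T: "T \<in> Mul n"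
  shows "mulprod a0 n S T \<in> Mul n"
proof -
  define c where "c = npow a0 (n - 3)"
  have cc: "c \<in> center" using npow_center[OF c] c_def by simp
  have s3: "Suc (n-3) = n-2" using n by arith
  have cm: "c = mprod (replicate (n-2) a0)" using npow_mprod[of a0 "n-3"] c_def
    by (simp only: s3)
  have ne: "replicate (n-2) a0 \<noteq> []" using n by simp
  have app: "\<And>x. mulprod a0 n S T x = S (c * T x)"
    by (simp add: mulprod_def c_def)
  show ?thesis unfolding Mul_def
  proof (intro CollectI allI impI conjI)
    fix xs :: "'a list" assume len: "length xs = n"
    have Tl0: "\<forall>ys. length ys = n \<longrightarrow> T (mprod ys) = hd ys * T (mprod (tl ys))"
      using T unfolding Mul_def by blast
    have Tr0: "\<forall>ys. length ys = n \<longrightarrow> T (mprod ys) = T (mprod (butlast ys)) * last ys"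
      using T unfolding Mul_def by blast
    have Tl: "T (mprod xs) = hd xs * T (mprod (tl xs))" using Tl0 len by blast
    have Tr: "T (mprod xs) = T (mprod (butlast xs)) * last xs" using Tr0 len by blast
    have Sl0: "\<forall>ys. length ys = n \<longrightarrow> S (mprod ys) = hd ys * S (mprod (tl ys))"
      using S unfolding Mul_def by blast
    have Sr0: "\<forall>ys. length ys = n \<longrightarrow> S (mprod ys) = S (mprod (butlast ys)) * last ys"
      using S unfolding Mul_def by blast
    have cy: "\<And>y. mprod (replicate (n-2) a0 @ [y]) = c * y"
    proof -
      fix y
      have "mprod (replicate (n-2) a0 @ [y]) = mprod (replicate (n-2) a0) * mprod [y]"
        by (rule mprod_append[OF ne]) simp
      then show "mprod (replicate (n-2) a0 @ [y]) = c * y" by (simp only: cm[symmetric] mprod.simps)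
    qed
    define Tt where "Tt = T (mprod (tl xs))"
    define L where "L = hd xs # (replicate (n-2) a0 @ [Tt])"
    have "length L = n" using n by (simp add: L_def)
    hence S1: "S (mprod L) = hd L * S (mprod (tl L))" using Sl0 by blast
    have L1: "mprod L = hd xs * (c * Tt)"
      unfolding L_def by (subst mprod_Cons) (simp_all add: cy)
    have L2: "mprod (tl L) = c * Tt" unfolding L_def by (simp add: cy)
    have "c * T (mprod xs) = c * (hd xs * Tt)" by (simp add: Tl Tt_def)
    also have "\<dots> = (c * hd xs) * Tt" by (simp add: mult.assoc)
    also have "\<dots> = (hd xs * c) * Tt" using cc unfolding center_def by (simp only: mem_Collect_eq)
    also have "\<dots> = hd xs * (c * Tt)" by (simp add: mult.assoc)
    finally have L3: "c * T (mprod xs) = hd xs * (c * Tt)" .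
    show "mulprod a0 n S T (mprod xs) = hd xs * mulprod a0 n S T (mprod (tl xs))"
      unfolding app L3 using S1 L1 L2 by (simp add: L_def Tt_def)
    define Tb where "Tb = T (mprod (butlast xs))"
    define R where "R = replicate (n-2) a0 @ [Tb, last xs]"
    have "length R = n" using n by (simp add: R_def)
    hence S2: "S (mprod R) = S (mprod (butlast R)) * last R" using Sr0 by blast
    have R1: "mprod R = c * (Tb * last xs)"
    proof -
      have "mprod R = mprod (replicate (n-2) a0) * mprod [Tb, last xs]"
        unfolding R_def by (rule mprod_append[OF ne]) simp
      then show ?thesis by (simp only: cm[symmetric] mprod.simps)
    qed
    have R2: "butlast R = replicate (n-2) a0 @ [Tb]" by (simp add: R_def butlast_append)
    have R3: "last R = last xs" by (simp add: R_def)
    show "mulprod a0 n S T (mprod xs) = mulprod a0 n S T (mprod (butlast xs)) * last xs"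
      unfolding app Tr using S2 R1 R2 R3 by (simp add: cy Tb_def mult.assoc)
  qed
qed

lemma Mul_subspace: "subspace (Mul n :: ('a::real_normed_algebra \<Rightarrow>\<^sub>L 'a) set)"
  unfolding subspace_def
proof (intro conjI ballI allI)
  show "0 \<in> Mul n" unfolding Mul_def by simp
next
  fix x y :: "'a \<Rightarrow>\<^sub>L 'a" assume x: "x \<in> Mul n" and y: "y \<in> Mul n"
  show "x + y \<in> Mul n" unfolding Mul_def
  proof (intro CollectI allI impI)
    fix xs :: "'a list" assume len: "length xs = n"
    have a1: "x (mprod xs) = hd xs * x (mprod (tl xs))" and a2: "x (mprod xs) = x (mprod (butlast xs)) * last xs"
      using x len unfolding Mul_def by blast+
    have b1: "y (mprod xs) = hd xs * y (mprod (tl xs))" and b2: "y (mprod xs) = y (mprod (butlast xs)) * last xs"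
      using y len unfolding Mul_def by blast+
    show "(x + y) (mprod xs) = hd xs * (x + y) (mprod (tl xs)) \<and>
        (x + y) (mprod xs) = (x + y) (mprod (butlast xs)) * last xs"
      by (intro conjI) (simp only: blinfun.add_left distrib_left distrib_right a1 b1,
          simp only: blinfun.add_left distrib_left distrib_right a2 b2)
  qed
next
  fix c :: real and x :: "'a \<Rightarrow>\<^sub>L 'a" assume x: "x \<in> Mul n"
  show "c *\<^sub>R x \<in> Mul n" unfolding Mul_def
  proof (intro CollectI allI impI)
    fix xs :: "'a list" assume len: "length xs = n"
    have a1: "x (mprod xs) = hd xs * x (mprod (tl xs))" and a2: "x (mprod xs) = x (mprod (butlast xs)) * last xs"
      using x len unfolding Mul_def by blast+
    show "(c *\<^sub>R x) (mprod xs) = hd xs * (c *\<^sub>R x) (mprod (tl xs)) \<and>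
        (c *\<^sub>R x) (mprod xs) = (c *\<^sub>R x) (mprod (butlast xs)) * last xs"
      by (intro conjI) (simp only: blinfun.scaleR_left mult_scaleR_left mult_scaleR_right a1,
          simp only: blinfun.scaleR_left mult_scaleR_left mult_scaleR_right a2)
  qed
qed

lemma Mul_closed: "closed (Mul n :: ('a::real_normed_algebra \<Rightarrow>\<^sub>L 'a) set)"
proof -
  have cont: "\<And>x. continuous_on UNIV (\<lambda>T::'a \<Rightarrow>\<^sub>L 'a. blinfun_apply T x)"
    by (intro continuous_intros)
  have "Mul n = (\<Inter>xs\<in>{xs. length xs = n}.
     {T. blinfun_apply T (mprod xs) = hd xs * blinfun_apply T (mprod (tl xs))} \<inter>
     {T. blinfun_apply T (mprod xs) = blinfun_apply T (mprod (butlast xs)) * last xs})"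
    unfolding Mul_def by auto
  also have "closed \<dots>"
    by (intro closed_INT ballI closed_Int closed_Collect_eq continuous_intros)
  finally show ?thesis .
qed

theorem mainTheorem6:
  fixes a0 :: "'a::{real_normed_algebra, banach}"
  assumes "a0 \<in> center" and "a0 \<noteq> 0" and "norm a0 \<le> 1"
    and "n \<ge> 3"
  shows "banach_algebra_on (Mul n) (mulprod a0 n)
    \<and> (\<forall>S\<in>Mul n. \<forall>T\<in>Mul n. mulprod a0 n S T \<in> Mul n)
    \<and> (\<forall>R\<in>Mul n. \<forall>S\<in>Mul n. \<forall>T\<in>Mul n.
          mulprod a0 n (mulprod a0 n R S) T = mulprod a0 n R (mulprod a0 n S T))"
proof -
  have cl: "\<forall>S\<in>Mul n. \<forall>T\<in>Mul n. mulprod a0 n S T \<in> Mul n"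
    using Mul_closed_under assms by blast
  have assoc: "\<And>R S T. mulprod a0 n (mulprod a0 n R S) T = mulprod a0 n R (mulprod a0 n S T)"
    by (rule blinfun_eqI) (simp add: mulprod_def)
  have nrm: "\<And>S T. norm (mulprod a0 n S T) \<le> norm S * norm T"
  proof -
    fix S T :: "'a \<Rightarrow>\<^sub>L 'a"
    define M where "M = blinfun_mult_right (npow a0 (n - 3))"
    have M1: "norm M \<le> 1"
    proof -
      have "norm M \<le> norm (npow a0 (n - 3))"
        unfolding M_def by (rule norm_blinfun_bound) (auto simp: norm_mult_ineq)
      also have "\<dots> \<le> 1" by (rule npow_norm[OF assms(3)])
      finally show ?thesis .
    qed
    have "norm (M o\<^sub>L T) \<le> norm M * norm T" by (rule norm_blinfun_compose)
    also have "\<dots> \<le> norm T" using M1 by (simp add: mult_left_le_one_le)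
    finally have MT: "norm (M o\<^sub>L T) \<le> norm T" .
    have "norm (mulprod a0 n S T) \<le> norm S * norm (M o\<^sub>L T)"
      unfolding mulprod_def M_def[symmetric] by (rule norm_blinfun_compose)
    also have "\<dots> \<le> norm S * norm T" using MT by (simp add: mult_left_mono)
    finally show "norm (mulprod a0 n S T) \<le> norm S * norm T" .
  qed
  have bil1: "\<And>R S T. mulprod a0 n (R + S) T = mulprod a0 n R T + mulprod a0 n S T
      \<and> mulprod a0 n R (S + T) = mulprod a0 n R S + mulprod a0 n R T"
    by (auto intro!: blinfun_eqI simp: mulprod_def blinfun.add_left blinfun.add_right
        distrib_left)
  have bil2: "\<And>c::real. \<And>S T. mulprod a0 n (c *\<^sub>R S) T = c *\<^sub>R mulprod a0 n S T
      \<and> mulprod a0 n S (c *\<^sub>R T) = c *\<^sub>R mulprod a0 n S T"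
    by (auto intro!: blinfun_eqI simp: mulprod_def blinfun.scaleR_left blinfun.scaleR_right
        mult_scaleR_right)
  have "complete (Mul n :: ('a \<Rightarrow>\<^sub>L 'a) set)"
    using Mul_closed complete_eq_closed by blast
  then show ?thesis
    unfolding banach_algebra_on_def using Mul_subspace cl assoc nrm bil1 bil2 by blast
qed

end
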